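(* Let $\lambda,\mu,\nu$ be partitions of the same integer with $\ell(\lambda)\le 9$, $\ell(\mu),\ell(\nu)\le 3$. Set $a=\lambda_{\ge4}$, $b=\lambda_{\ge2}+\lambda_{\ge7}$, $c=\lambda_{\ge3}+\lambda_{\ge8}$, $d=\lambda_2+2\lambda_3+2\lambda_4+3\lambda_5+3\lambda_6+4\lambda_7+4\lambda_8+5\lambda_9$. Then the atomic Kronecker coefficient $\tilde g_{\mu,\nu,\lambda}$ is nonzero if and only if all of the following hold: $$\nu_2+\nu_3-a\ge0,\quad \mu_2+\mu_3+\nu_2+\nu_3-b\ge0,\quad \mu_3+\nu_2+\nu_3-c\ge0,\quad \mu_2+2\mu_3+2\nu_2+3\nu_3-d\ge0.$$
   Context: Partitions are padded with zero parts and $\lambda_{\ge i}=\lambda_i+\lambda_{i+1}+\cdots$. Let $X=\{1,x_1,x_2\}$, $Y=\{1,y_1,y_2\}$, $XY=\{ab:a\in X,b\in Y\}$ ordered by $1\succ x_1\succ x_2\succ y_1\succ y_2\succ x_1y_1\succ x_1y_2\succ x_2y_1\succ x_2y_2$. Let $\mathcal P_{3,3}$ be the set of unordered pairs $\{u,v\}$ of distinct elements of $XY$, not both of the form $a\cdot1$ and not both of the form $1\cdot b$, written with $u\succ v$. Substituting $x_1=s_1t_1$, $x_2=s_1s_2t_1^2$, $y_1=s_0s_1s_2t_1^2$, $y_2=s_0s_1s_2t_1^3$, each $v/u$ becomes a monomial in $s_0,s_1,s_2,t_1$ with nonnegative exponents, and $F_{3,3}(s_0,s_1,s_2,t_1)=\prod_{\{u\succ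 v\}\in\mathcal P_{3,3}}(1-v/u)^{-1}$ (a product of 30 factors) is expanded as a power series. The atomic Kronecker coefficient is $\tilde g_{\mu,\nu,\lambda}:=$ the coefficient of $s_0^{\nu_2+\nu_3-a}\,s_1^{\mu_2+\mu_3+\nu_2+\nu_3-b}\,s_2^{\mu_3+\nu_2+\nu_3-c}\,t_1^{\mu_2+2\mu_3+2\nu_2+3\nu_3-d}$ in $F_{3,3}$ (taken to be $0$ if some exponent is negative). *)

theory Defs
  imports Main
begin

text \<open>Monomials in s0,s1,s2,t1 are represented by exponent vectors e :: nat => int,
  coordinates 0,1,2,3 standing for the exponents of s0,s1,s2,t1.\<close>

definition vec4 :: "int \<Rightarrow> int \<Rightarrow> int \<Rightarrow> int \<Rightarrow> (nat \<Rightarrow> int)" where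
  "vec4 a b c d = (\<lambda>k. if k = 0 then a else if k = 1 then b else if k = 2 then c
                       else if k = 3 then d else 0)"

text \<open>Exponent vectors after the substitution: x1 = s1 t1, x2 = s1 s2 t1^2,
  y1 = s0 s1 s2 t1^2, y2 = s0 s1 s2 t1^3; index 0 stands for the element 1.\<close>

definition xexp :: "nat \<Rightarrow> (nat \<Rightarrow> int)" where
  "xexp i = (if i = 1 then vec4 0 1 0 1 else if i = 2 then vec4 0 1 1 2 else vec4 0 0 0 0)"

definition yexp :: "nat \<Rightarrow> (nat \<Rightarrow> int)" where
  "yexp j = (if j = 1 then vec4 1 1 1 2 else if j = 2 then vec4 1 1 1 3 else vec4 0 0 0 0)"

text \<open>The element x_i y_j of XY (with x_0 = y_0 = 1) is encoded as (i,j).\<close>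

definition mexp :: "nat \<times> nat \<Rightarrow> (nat \<Rightarrow> int)" where
  "mexp p = (\<lambda>k. xexp (fst p) k + yexp (snd p) k)"

text \<open>The total order 1 > x1 > x2 > y1 > y2 > x1y1 > x1y2 > x2y1 > x2y2, listed from largest.\<close>

definition XY_list :: "(nat \<times> nat) list" where
  "XY_list = [(0,0),(1,0),(2,0),(0,1),(0,2),(1,1),(1,2),(2,1),(2,2)]"

definition XY_succ :: "nat \<times> nat \<Rightarrow> nat \<times> nat \<Rightarrow> bool" where
  "XY_succ u v \<longleftrightarrow> (\<exists>i j. i < j \<and> j < length XY_list \<and> XY_list ! i = u \<and> XY_list ! j = v)"

text \<open>P_{3,3}: unordered pairs {u,v} of distinct elements, written as (u,v) with u > v,
  not both of the form a*1 and not both of the form 1*b.\<close>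

definition P33 :: "((nat \<times> nat) \<times> (nat \<times> nat)) set" where
  "P33 = {(u,v). u \<in> set XY_list \<and> v \<in> set XY_list \<and> XY_succ u v
               \<and> \<not> (snd u = 0 \<and> snd v = 0) \<and> \<not> (fst u = 0 \<and> fst v = 0)}"

definition ratio_exp :: "(nat \<times> nat) \<times> (nat \<times> nat) \<Rightarrow> (nat \<Rightarrow> int)" where
  "ratio_exp q = (\<lambda>k. mexp (snd q) k - mexp (fst q) k)"

text \<open>Coefficient of s0^e0 s1^e1 s2^e2 t1^e3 in the power series expansion of
  F_{3,3} = prod_{q in P33} (1 - v/u)^(-1) = prod_{q in P33} sum_{n} (v/u)^n:
  the number of choices of exponents n_q (q in P33) with sum_q n_q * exp(v/u) = e.\<close>

definition F33_coeff :: "(nat \<Rightarrow> int) \<Rightarrow> nat" where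
  "F33_coeff e = (if (\<exists>k<4. e k < 0) then 0 else
     card {n :: (nat \<times> nat) \<times> (nat \<times> nat) \<Rightarrow> nat.
             (\<forall>q. q \<notin> P33 \<longrightarrow> n q = 0) \<and>
             (\<forall>k<4. (\<Sum>q\<in>P33. int (n q) * ratio_exp q k) = e k)})"

text \<open>Partitions as 1-indexed sequences nat => nat (index 0 unused and set to 0),
  weakly decreasing, with at most l nonzero parts.\<close>

definition is_partition_len :: "nat \<Rightarrow> (nat \<Rightarrow> nat) \<Rightarrow> bool" where
  "is_partition_len l p \<longleftrightarrow> p 0 = 0 \<and> (\<forall>i\<ge>1. p (Suc i) \<le> p i) \<and> (\<forall>i>l. p i = 0)"

definition psize :: "(nat \<Rightarrow> nat) \<Rightarrow> nat \<Rightarrow> nat" where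
  "psize p l = (\<Sum>i\<in>{1..l}. p i)"

definition tail9 :: "(nat \<Rightarrow> nat) \<Rightarrow> nat \<Rightarrow> nat" where
  "tail9 p i = (\<Sum>j\<in>{i..9}. p j)"

definition par_a :: "(nat \<Rightarrow> nat) \<Rightarrow> int" where
  "par_a lam = int (tail9 lam 4)"
definition par_b :: "(nat \<Rightarrow> nat) \<Rightarrow> int" where
  "par_b lam = int (tail9 lam 2) + int (tail9 lam 7)"
definition par_c :: "(nat \<Rightarrow> nat) \<Rightarrow> int" where
  "par_c lam = int (tail9 lam 3) + int (tail9 lam 8)"
definition par_d :: "(nat \<Rightarrow> nat) \<Rightarrow> int" where
  "par_d lam = int (lam 2 + 2 * lam 3 + 2 * lam 4 + 3 * lam 5 + 3 * lam 6
                    + 4 * lam 7 + 4 * lam 8 + 5 * lam 9)"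

definition atomic_kron :: "(nat \<Rightarrow> nat) \<Rightarrow> (nat \<Rightarrow> nat) \<Rightarrow> (nat \<Rightarrow> nat) \<Rightarrow> nat" where
  "atomic_kron mu nu lam = F33_coeff (vec4
      (int (nu 2 + nu 3) - par_a lam)
      (int (mu 2 + mu 3 + nu 2 + nu 3) - par_b lam)
      (int (mu 3 + nu 2 + nu 3) - par_c lam)
      (int (mu 2 + 2 * mu 3 + 2 * nu 2 + 3 * nu 3) - par_d lam))"

end

theory Submission imports Defs begin

definition good :: "(nat \<times> nat) \<times> (nat \<times> nat) \<Rightarrow> bool" where
 "good q \<longleftrightarrow> ratio_exp q 0 \<ge> 0 \<and> ratio_exp q 1 \<ge> 0 \<and> ratio_exp q 2 \<ge> 0 \<and> ratio_exp q 3 \<ge> 0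
   \<and> ratio_exp q 0 + ratio_exp q 1 + ratio_exp q 2 + ratio_exp q 3 \<ge> 1"

lemma P33_sub: "P33 \<subseteq> set [(XY_list!i, XY_list!j). j <- [0..<length XY_list], i <- [0..<j]]"
  unfolding P33_def XY_succ_def by force

lemma all_pairs: "list_all good [(XY_list!i, XY_list!j). j <- [0..<length XY_list], i <- [0..<j]]"
  by code_simp

lemma P33_finite: "finite P33"
  by (rule finite_subset[OF P33_sub]) simp

lemma P33_good: "q \<in> P33 \<Longrightarrow> good q"
  using P33_sub all_pairs by (auto simp: list_all_iff)

lemma units:
  "((2,0),(0,1)) \<in> P33" "((0,2),(1,1)) \<in> P33" "((1,2),(2,1)) \<in> P33" "((1,1),(1,2)) \<in> P33"
  unfolding P33_def XY_succ_def XY_list_def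
  apply simp_all
  apply (rule exI[of _ 2], simp, rule exI[of _ 3], simp)
  apply (rule exI[of _ 4], simp, rule exI[of _ 5], simp)
  apply (rule exI[of _ 6], simp, rule exI[of _ 7], simp)
  apply (rule exI[of _ 5], simp, rule exI[of _ 6], simp)
  done

lemma unit_vals:
  "ratio_exp ((2,0),(0,1)) = vec4 1 0 0 0"
  "ratio_exp ((0,2),(1,1)) = vec4 0 1 0 0"
  "ratio_exp ((1,2),(2,1)) = vec4 0 0 1 0"
  "ratio_exp ((1,1),(1,2)) = vec4 0 0 0 1"
  by (auto simp: ratio_exp_def mexp_def xexp_def yexp_def vec4_def)

lemma sum4: "(\<Sum>k<4. f k) = f 0 + f 1 + f 2 + f (3::nat)"
  by (simp add: eval_nat_numeral)

lemma good_iff: "good q \<longleftrightarrow> (\<forall>k<4. ratio_exp q k \<ge> 0) \<and> (\<Sum>k<4. ratio_exp q k) \<ge> 1"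
  unfolding good_def sum4 by (auto simp: less_Suc_eq eval_nat_numeral)

lemma coeff_iff: "F33_coeff e \<noteq> 0 \<longleftrightarrow> (\<forall>k<4. e k \<ge> 0)"
proof (cases "\<exists>k<4. e k < 0")
  case True then show ?thesis by (auto simp: F33_coeff_def not_le)
next
  case False
  hence nn: "\<forall>k<4. e k \<ge> 0" by auto
  define S where "S = {n :: (nat \<times> nat) \<times> (nat \<times> nat) \<Rightarrow> nat.
             (\<forall>q. q \<notin> P33 \<longrightarrow> n q = 0) \<and>
             (\<forall>k<4. (\<Sum>q\<in>P33. int (n q) * ratio_exp q k) = e k)}"
  have F: "F33_coeff e = card S" using False unfolding F33_coeff_def S_def by (simp only: if_False)
  define B where "B = nat (\<Sum>k<4. e k)"
  have bound: "n q \<le> B" if "n \<in> S" "q \<in> P33" for n q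
  proof -
    have g: "\<forall>k<4. ratio_exp q k \<ge> 0" "(\<Sum>k<4. ratio_exp q k) \<ge> 1"
      using P33_good[OF that(2)] good_iff by auto
    have "int (n q) \<le> int (n q) * (\<Sum>k<4. ratio_exp q k)"
      using g(2) by (simp add: mult_le_cancel_left1)
    also have "\<dots> = (\<Sum>k<4. int (n q) * ratio_exp q k)" by (simp add: sum_distrib_left)
    also have "\<dots> \<le> (\<Sum>k<4. \<Sum>q'\<in>P33. int (n q') * ratio_exp q' k)"
    proof (rule sum_mono)
      fix k assume k: "k \<in> {..<4::nat}"
      show "int (n q) * ratio_exp q k \<le> (\<Sum>q'\<in>P33. int (n q') * ratio_exp q' k)"
        by (rule member_le_sum[where f="\<lambda>q'. int (n q') * ratio_exp q' k", OF that(2) _ P33_finite])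
           (use k P33_good good_iff in auto)
    qed
    also have "\<dots> = (\<Sum>k<4. e k)" using that(1) by (simp add: S_def)
    finally show ?thesis unfolding B_def by linarith
  qed
  have fin: "finite S"
    by (rule finite_subset[OF _ finite_set_of_finite_funs[OF P33_finite, of "{0..B}" 0]])
       (use bound in \<open>auto simp: S_def\<close>)
  define q0 q1 q2 q3 where "q0 = ((2::nat,0::nat),(0::nat,1::nat))" "q1 = ((0::nat,2::nat),(1::nat,1::nat))"
    "q2 = ((1::nat,2::nat),(2::nat,1::nat))" "q3 = ((1::nat,1::nat),(1::nat,2::nat))"
  define w where "w = (\<lambda>q. if q = q0 then nat (e 0) else if q = q1 then nat (e 1)
      else if q = q2 then nat (e 2) else if q = q3 then nat (e 3) else 0)"
  have Q: "{q0,q1,q2,q3} \<subseteq> P33" using units by (simp add: q0_q1_q2_q3_def)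
  have U: "ratio_exp q0 = vec4 1 0 0 0" "ratio_exp q1 = vec4 0 1 0 0"
     "ratio_exp q2 = vec4 0 0 1 0" "ratio_exp q3 = vec4 0 0 0 1"
    unfolding q0_q1_q2_q3_def by (simp_all only: unit_vals)
  have D: "q0 \<noteq> q1" "q0 \<noteq> q2" "q0 \<noteq> q3" "q1 \<noteq> q2" "q1 \<noteq> q3" "q2 \<noteq> q3"
     "q1 \<noteq> q0" "q2 \<noteq> q0" "q3 \<noteq> q0" "q2 \<noteq> q1" "q3 \<noteq> q1" "q3 \<noteq> q2"
    by (simp_all add: q0_q1_q2_q3_def)
  have "w \<in> S"
  proof -
    have "(\<Sum>q\<in>P33. int (w q) * ratio_exp q k) = e k" if k: "k < 4" for k
    proof -
      have "(\<Sum>q\<in>P33. int (w q) * ratio_exp q k) = (\<Sum>q\<in>{q0,q1,q2,q3}. int (w q) * ratio_exp q k)"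
        by (rule sum.mono_neutral_right[OF P33_finite Q]) (auto simp: w_def)
      also have "\<dots> = int (nat (e 0)) * vec4 1 0 0 0 k + int (nat (e 1)) * vec4 0 1 0 0 k
           + int (nat (e 2)) * vec4 0 0 1 0 k + int (nat (e 3)) * vec4 0 0 0 1 k"
        by (simp add: w_def U D)
      also have "\<dots> = e k" using k nn by (auto simp: vec4_def less_Suc_eq eval_nat_numeral)
      finally show ?thesis .
    qed
    moreover have "\<forall>q. q \<notin> P33 \<longrightarrow> w q = 0" using Q by (auto simp: w_def)
    ultimately show ?thesis by (simp add: S_def)
  qed
  hence "card S \<noteq> 0" using fin by auto
  thus ?thesis using F nn by simp
qed

lemma vec4_nonneg: "(\<forall>k<4. vec4 a b c d k \<ge> 0) \<longleftrightarrow> a \<ge> 0 \<and> b \<ge> 0 \<and> c \<ge> 0 \<and> d \<ge> 0"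
  by (auto simp: vec4_def less_Suc_eq eval_nat_numeral)

theorem proposition4p4:
  fixes lam mu nu :: "nat \<Rightarrow> nat"
  assumes "is_partition_len 9 lam" and "is_partition_len 3 mu" and "is_partition_len 3 nu"
    and "psize lam 9 = psize mu 3" and "psize mu 3 = psize nu 3"
  shows "atomic_kron mu nu lam \<noteq> 0 \<longleftrightarrow>
           int (nu 2 + nu 3) - par_a lam \<ge> 0 \<and>
           int (mu 2 + mu 3 + nu 2 + nu 3) - par_b lam \<ge> 0 \<and>
           int (mu 3 + nu 2 + nu 3) - par_c lam \<ge> 0 \<and>
           int (mu 2 + 2 * mu 3 + 2 * nu 2 + 3 * nu 3) - par_d lam \<ge> 0"
  unfolding atomic_kron_def coeff_iff vec4_nonneg ..

end
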